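(* For any integer $n \geq 2$ and any integer $m \geq n$ there are $n+1$ translates $A_0, A_1, \dots, A_n$ of the set $D_n^m$ (defined below) whose interiors are pairwise disjoint, but such that $A_0$ touches every $A_i$ for $1 \leq i \leq n$ (i.e. $A_0 \cap A_i \neq \emptyset$). In particular, for every $n > 0$ there is a planar topological disk $A_0$ and $n$ translates $A_1,\dots,A_n$ of it such that $A_0,\dots,A_n$ have pairwise disjoint interiors and each $A_i$ ($1\le i\le n$) touches $A_0$.
   Context: Let $s_1, s_2, \dots$ be the sequence with $s_i = 1 + \nu_2(i)$, where $\nu_2(i)$ is the exponent of $2$ in the prime factorization of $i$ (so $s_i$ is the position, counted from the right, of the lowest $1$ bit of $i$ in binary; the sequence begins $1,2,1,3,1,2,1,4,\dots$). For $i \geq 1$ put $y_i = \sum_{j=1}^{i-1} s_j$ (so $y_1 = 0$). For integers $m \geq 2$, $n \geq 1$, define the bars $B_i = [(i-1)m,\, im] \times [y_i,\, y_i + 1]$ for $1 \leq i \leq 2^n$, and the connectors $V_i = [im-1,\, im] \times [y_i + 1,\, y_{i+1} + 1]$ for $1 \leq i \leq 2^n - 1$. Define $D_n^m = \bigcup_{i=1}^{2^n} B_i \cup \bigcup_{i=1}^{2^n-1} V_i \subset \mathbb{R}^2$; this is a topological disk (Jordan region). Two sets touch if they intersect; here the touching translates have disjoint interiors. *)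

theory Defs
  imports "HOL-Analysis.Analysis" "HOL-Computational_Algebra.Primes"
begin

definition sseq :: "nat \<Rightarrow> nat" where
  "sseq i = 1 + multiplicity (2::nat) i"

definition yseq :: "nat \<Rightarrow> nat" where
  "yseq i = (\<Sum>j\<in>{1..<i}. sseq j)"

definition bar :: "nat \<Rightarrow> nat \<Rightarrow> (real \<times> real) set" where
  "bar m i = {(real i - 1) * real m .. real i * real m} \<times> {real (yseq i) .. real (yseq i) + 1}"

definition connector :: "nat \<Rightarrow> nat \<Rightarrow> (real \<times> real) set" where
  "connector m i = {real i * real m - 1 .. real i * real m} \<times> {real (yseq i) + 1 .. real (yseq (i+1)) + 1}"

definition Dnm :: "nat \<Rightarrow> nat \<Rightarrow> (real \<times> real) set" where
  "Dnm n m = (\<Union>i\<in>{1..2^n}. bar m i) \<union> (\<Union>i\<in>{1..<2^n}. connector m i)"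

definition topological_disk :: "(real \<times> real) set \<Rightarrow> bool" where
  "topological_disk A \<longleftrightarrow> (cball (0::real \<times> real) 1) homeomorphic A"

end

theory Submission
  imports Defs
begin


lemma Y_Suc: "1 \<le> i \<Longrightarrow> yseq (Suc i) = yseq i + sseq i"
  unfolding yseq_def by (simp add: sum.atLeastLessThan_Suc)

lemma Y1[simp]: "yseq (Suc 0) = 0" by (simp add: yseq_def)
lemma Y1'[simp]: "yseq 1 = 0" by (simp add: yseq_def)

lemma Y_fact: "yseq (x+1) = x + multiplicity (2::nat) (fact x)"
proof (induction x)
  case 0 then show ?case by simp
next
  case (Suc x)
  have "multiplicity (2::nat) (Suc x * fact x) = multiplicity (2::nat) (Suc x) + multiplicity (2::nat) (fact x)"
    by (rule prime_elem_multiplicity_mult_distrib) auto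
  then have "multiplicity (2::nat) (fact (Suc x)) = multiplicity (2::nat) (Suc x) + multiplicity (2::nat) (fact x)"
    by (simp add: fact_Suc del: of_nat_Suc)
  then show ?case using Suc Y_Suc[of "Suc x"] by (simp add: sseq_def)
qed

lemma Y_superadd: "yseq (a+1) + yseq (b+1) \<le> yseq (a+b+1)"
proof -
  have f: "fact a * fact b * ((a+b) choose a) = (fact (a+b) :: nat)"
    using binomial_fact_lemma[of a "a+b"] by simp
  have "multiplicity (2::nat) (fact (a+b)) = multiplicity (2::nat) (fact a * fact b) + multiplicity (2::nat) ((a+b) choose a)"
    by (subst f[symmetric], rule prime_elem_multiplicity_mult_distrib) auto
  also have "multiplicity (2::nat) (fact a * fact b) = multiplicity (2::nat) (fact a) + multiplicity (2::nat) (fact b)"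
    by (rule prime_elem_multiplicity_mult_distrib) auto
  finally show ?thesis unfolding Y_fact by simp
qed

lemma mult_small:
  assumes "1 \<le> r" "r < 2^K"
  shows "multiplicity (2::nat) r < K"
proof -
  have "2 ^ multiplicity (2::nat) r \<le> r"
    using multiplicity_dvd[of 2 r] assms by (simp add: dvd_imp_le)
  then have "2 ^ multiplicity (2::nat) r < (2::nat)^K" using assms by linarith
  then show ?thesis by (simp add: power_strict_increasing_iff)
qed

lemma s_small: "1 \<le> r \<Longrightarrow> r < 2^K \<Longrightarrow> sseq r \<le> K"
  using mult_small[of r K] by (simp add: sseq_def)

lemma s_pow: "sseq (2^K) = K + 1"
  by (simp add: sseq_def multiplicity_prime_power)

lemma s_shift:
  assumes "2^K dvd T" "1 \<le> x" "x < 2^K"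
  shows "sseq (T + x) = sseq x"
proof -
  let ?e = "multiplicity (2::nat) x"
  have e: "?e < K" using mult_small assms by blast
  have d1: "2^?e dvd x" by (rule multiplicity_dvd)
  have d2: "\<not> 2^Suc ?e dvd x"
    using assms(2) by (metis multiplicity_lessI not_less_eq_eq not_one_le_zero order_refl is_unit_power_iff
        nat_dvd_1_iff_1 numeral_eq_one_iff semiring_norm(85) less_Suc_eq_le multiplicity_geI)
  have t1: "2^?e dvd T" using e assms(1) by (meson dvd_trans le_imp_power_dvd less_imp_le)
  have t2: "2^Suc ?e dvd T" using e assms(1) by (meson dvd_trans le_imp_power_dvd Suc_leI)
  have "2^?e dvd T + x" using d1 t1 by simp
  moreover have "\<not> 2^Suc ?e dvd T + x" using d2 t2 by (simp add: dvd_add_right_iff)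
  ultimately have "multiplicity (2::nat) (T + x) = ?e" by (rule multiplicity_eqI)
  then show ?thesis by (simp add: sseq_def)
qed

lemma Y_shift:
  assumes "2^K dvd T" "x < 2^K"
  shows "yseq (T + x + 1) = yseq (T+1) + yseq (x+1)"
  using assms(2)
proof (induction x)
  case 0 then show ?case by simp
next
  case (Suc x)
  have "yseq (T + Suc x + 1) = yseq (T + x + 1) + sseq (T + x + 1)"
    using Y_Suc[of "T+x+1"] by simp
  also have "sseq (T + x + 1) = sseq (x+1)" using s_shift[OF assms(1), of "x+1"] Suc.prems by simp
  finally show ?case using Suc Y_Suc[of "x+1"] by simp
qed



definition cellD :: "nat \<Rightarrow> nat \<Rightarrow> int \<Rightarrow> int \<Rightarrow> bool" where
"cellD n m u v \<longleftrightarrow> (\<exists>i. 1 \<le> i \<and> i \<le> 2^n \<and> int ((i-1)*m) \<le> u \<and> u < int (i*m) \<and> int (yseq i) \<le> v \<and>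
   (v \<le> int (yseq i) \<or> (u = int (i*m) - 1 \<and> i < 2^n \<and> v \<le> int (yseq (i+1)))))"

lemma blk: "int (a*m) \<le> X \<Longrightarrow> X < int (b*m) \<Longrightarrow> a < b"
proof -
  assume "int (a*m) \<le> X" "X < int (b*m)"
  then have "a*m < b*m" by linarith
  then show "a < b" by (simp add: mult_less_cancel2)
qed

lemma Y_mono: "1 \<le> i \<Longrightarrow> yseq i \<le> yseq (i+1)"
  using Y_Suc[of i] by simp

lemma G:
  assumes c: "1 \<le> c" "c < m" and b: "\<beta> \<le> int (yseq (t+1)) - 1"
    and D1: "cellD n m u v" and D2: "cellD n m (u - int (t*m+c)) (v - \<beta>)"
  shows False
proof -
  obtain q where q: "1 \<le> q" "q \<le> 2^n" "int ((q-1)*m) \<le> u" "u < int (q*m)" "int (yseq q) \<le> v"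
    "(v \<le> int (yseq q) \<or> (u = int (q*m) - 1 \<and> q < 2^n \<and> v \<le> int (yseq (q+1))))"
    using D1 unfolding cellD_def by blast
  obtain r where r: "1 \<le> r" "r \<le> 2^n" "int ((r-1)*m) \<le> u - int (t*m+c)" "u - int (t*m+c) < int (r*m)"
    "int (yseq r) \<le> v - \<beta>"
    "(v - \<beta> \<le> int (yseq r) \<or> (u - int (t*m+c) = int (r*m) - 1 \<and> r < 2^n \<and> v - \<beta> \<le> int (yseq (r+1))))"
    using D2 unfolding cellD_def by blast
  have e1: "(r-1+t)*m = (r-1)*m + t*m" by (simp add: add_mult_distrib)
  have "int ((r-1+t)*m) \<le> u" using r(3) e1 by simp
  then have lo: "r - 1 + t < q" using blk q(4) by blast
  have e2: "(r+t+1)*m = r*m + t*m + m" by (simp add: add_mult_distrib)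
  have "u < int ((r+t+1)*m)" using r(4) e2 c by simp
  then have hi: "q - 1 < r + t + 1" using blk q(3) by blast
  have sup: "\<And>p. 1 \<le> p \<Longrightarrow> yseq p + yseq (t+1) \<le> yseq (p+t)"
  proof -
    fix p :: nat assume "1 \<le> p"
    then show "yseq p + yseq (t+1) \<le> yseq (p+t)" using Y_superadd[of "p-1" t] by simp
  qed
  have Yr: "yseq r \<le> yseq (r+1)" using Y_mono r(1) by blast
  show False
  proof (cases "q = r + t")
    case True
    have "u - int (t*m+c) \<noteq> int (r*m) - 1"
    proof
      assume "u - int (t*m+c) = int (r*m) - 1"
      then have "u = int ((r+t)*m) + int c - 1" by (simp add: add_mult_distrib)
      then show False using q(4) True c by simp
    qed
    then have "v - \<beta> \<le> int (yseq r)" using r(6) by blast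
    moreover have "yseq r + yseq (t+1) \<le> yseq q" using sup[OF r(1)] True by simp
    ultimately show False using q(5) b by linarith
  next
    case False
    then have qq: "q = r + t + 1" using lo hi by linarith
    have "v - \<beta> \<le> int (yseq (r+1))" using r(6) Yr by linarith
    moreover have "yseq (r+1) + yseq (t+1) \<le> yseq q" using sup[of "r+1"] qq by (simp add: add.commute add.left_commute)
    ultimately show False using q(5) b by linarith
  qed
qed



lemma tt_facts:
  assumes "1 \<le> k" "k \<le> n"
  shows "2^(k-1) dvd (2::nat)^n - 2^(k-1)" "(2::nat)^n - 2^(k-1) + 2^(k-1) = 2^n"
proof -
  have "k-1 + (n-k+1) = n" using assms by simp
  then have "(2::nat)^n = 2^(k-1) * 2^(n-k+1)" by (metis power_add)
  then show "2^(k-1) dvd (2::nat)^n - 2^(k-1)" by (metis dvd_diff_nat dvd_refl dvd_triv_left)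
  have "(2::nat)^(k-1) \<le> 2^n" using assms by (simp add: power_increasing)
  then show "(2::nat)^n - 2^(k-1) + 2^(k-1) = 2^n" by simp
qed

lemma H:
  assumes k: "1 \<le> k" "k \<le> n" and c: "c < m" and tdef: "t = 2^n - 2^(k-1)"
    and D1: "cellD n m u v" and D2: "cellD n m (u - int (t*m+c)) (v - int (yseq (t+1) + k))"
  shows False
proof -
  have dv: "2^(k-1) dvd t" and tsum: "t + 2^(k-1) = 2^n" using tt_facts[OF k] tdef by auto
  have SH: "\<And>x. x < 2^(k-1) \<Longrightarrow> yseq (t + x + 1) = yseq (t+1) + yseq (x+1)"
    using Y_shift[OF dv] by blast
  obtain i where q: "1 \<le> i" "i \<le> 2^n" "int ((i-1)*m) \<le> u" "u < int (i*m)" "int (yseq i) \<le> v"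
    "(v \<le> int (yseq i) \<or> (u = int (i*m) - 1 \<and> i < 2^n \<and> v \<le> int (yseq (i+1))))"
    using D1 unfolding cellD_def by blast
  obtain r where r: "1 \<le> r" "r \<le> 2^n" "int ((r-1)*m) \<le> u - int (t*m+c)" "u - int (t*m+c) < int (r*m)"
    "int (yseq r) \<le> v - int (yseq (t+1) + k)"
    using D2 unfolding cellD_def by blast
  have e1: "(r-1+t)*m = (r-1)*m + t*m" by (simp add: add_mult_distrib)
  have "int ((r-1+t)*m) \<le> u" using r(3) e1 by simp
  then have lo: "r - 1 + t < i" using blk q(4) by blast
  have e2: "(r+t+1)*m = r*m + t*m + m" by (simp add: add_mult_distrib)
  have "u < int ((r+t+1)*m)" using r(4) e2 c by simp
  then have hi: "i - 1 < r + t + 1" using blk q(3) by blast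
  have vlo: "int (yseq r) + int (yseq (t+1)) + int k \<le> v" using r(5) by simp
  show False
  proof (cases "i = r + t")
    case True
    have Yi: "yseq i = yseq (t+1) + yseq r"
      using SH[of "r-1"] True r(1) tsum q(2) by (simp add: add.commute)
    show ?thesis
    proof (cases "v \<le> int (yseq i)")
      case True then show ?thesis using Yi vlo k by linarith
    next
      case False
      then have cn: "i < 2^n" "v \<le> int (yseq (i+1))" using q(6) by auto
      then have rs: "r < 2^(k-1)" using True tsum by linarith
      have "yseq (i+1) = yseq (t+1) + yseq (r+1)" using SH[OF rs] True by (simp add: add.commute add.left_commute)
      also have "yseq (r+1) = yseq r + sseq r" using Y_Suc r(1) by simp
      finally have "yseq (i+1) \<le> yseq (t+1) + yseq r + (k-1)" using s_small[OF r(1) rs] by simp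
      then show ?thesis using cn vlo k by linarith
    qed
  next
    case False
    then have ii: "i = r + t + 1" using lo hi by linarith
    then have rs: "r < 2^(k-1)" using tsum q(2) by linarith
    have "yseq i = yseq (t+1) + yseq (r+1)" using SH[OF rs] ii by (simp add: add.commute add.left_commute)
    also have "yseq (r+1) = yseq r + sseq r" using Y_Suc r(1) by simp
    finally have Yi: "yseq i \<le> yseq (t+1) + yseq r + (k-1)" using s_small[OF r(1) rs] by simp
    have "u \<noteq> int (i*m) - 1"
    proof
      assume "u = int (i*m) - 1"
      then have "u = int ((r+t)*m) + int m - 1" using ii by (simp add: add_mult_distrib)
      moreover have "u < int ((r+t)*m) + int c" using r(4) by (simp add: add_mult_distrib)
      ultimately show False using c by simp
    qed
    then have "v \<le> int (yseq i)" using q(6) by blast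
    then show ?thesis using Yi vlo k by linarith
  qed
qed



lemma nonint_less: "(x::real) \<le> of_int z \<Longrightarrow> x \<notin> \<int> \<Longrightarrow> x < of_int z"
  by (metis Ints_of_int order_le_less)

lemma nonint_less_nat: "(x::real) \<le> real z \<Longrightarrow> x \<notin> \<int> \<Longrightarrow> x < real z"
  by (metis Ints_of_nat order_le_less)

lemma cell_of:
  assumes "q \<in> Dnm n m" "fst q \<notin> \<int>" "snd q \<notin> \<int>" "1 \<le> m"
  shows "cellD n m \<lfloor>fst q\<rfloor> \<lfloor>snd q\<rfloor>"
proof -
  obtain x y where q: "q = (x, y)" by (cases q)
  have xn: "x \<notin> \<int>" and yn: "y \<notin> \<int>" using assms q by auto
  from assms(1) consider (bar) i where "i \<in> {1..2^n}" "(x,y) \<in> bar m i"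
    | (con) i where "i \<in> {1..<2^n}" "(x,y) \<in> connector m i"
    unfolding Dnm_def q by blast
  then show ?thesis
  proof cases
    case bar
    then have i: "1 \<le> i" "i \<le> 2^n" and b: "(real i - 1) * real m \<le> x" "x \<le> real i * real m"
      "real (yseq i) \<le> y" "y \<le> real (yseq i) + 1" unfolding bar_def by auto
    have r1: "real ((i-1)*m) = (real i - 1) * real m" using i by (simp add: of_nat_diff)
    have "real ((i-1)*m) \<le> x" unfolding r1 by (rule b(1))
    then have u1: "int ((i-1)*m) \<le> \<lfloor>x\<rfloor>" by (simp add: le_floor_iff)
    have "x < real (i*m)" using nonint_less_nat[of x "i*m"] b xn by simp
    then have u2: "\<lfloor>x\<rfloor> < int (i*m)" by (simp add: floor_less_iff)
    have v1: "int (yseq i) \<le> \<lfloor>y\<rfloor>" using b by (simp add: le_floor_iff)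
    have "y < real (yseq i + 1)" using nonint_less_nat[of y "yseq i + 1"] b yn by simp
    then have v2: "\<lfloor>y\<rfloor> \<le> int (yseq i)" by (simp add: floor_le_iff)
    show ?thesis unfolding cellD_def q using i u1 u2 v1 v2 by auto
  next
    case con
    then have i: "1 \<le> i" "i < 2^n" and b: "real i * real m - 1 \<le> x" "x \<le> real i * real m"
      "real (yseq i) + 1 \<le> y" "y \<le> real (yseq (i+1)) + 1" unfolding connector_def by auto
    have x1: "real_of_int (int (i*m) - 1) \<le> x" using b by simp
    then have u1: "int (i*m) - 1 \<le> \<lfloor>x\<rfloor>" by (simp only: le_floor_iff)
    have "x < real (i*m)" using nonint_less_nat[of x "i*m"] b xn by simp
    then have u2: "\<lfloor>x\<rfloor> < int (i*m)" by (simp add: floor_less_iff)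
    have ux: "\<lfloor>x\<rfloor> = int (i*m) - 1" using u1 u2 by linarith
    have "(i-1)*m + 1 \<le> i*m" using i assms(4) by (cases i) auto
    then have u1': "int ((i-1)*m) \<le> \<lfloor>x\<rfloor>" using ux by linarith
    have v1: "int (yseq i) + 1 \<le> \<lfloor>y\<rfloor>" using b by (simp add: le_floor_iff)
    have "y < real (yseq (i+1) + 1)" using nonint_less_nat[of y "yseq (i+1) + 1"] b yn by simp
    then have v2: "\<lfloor>y\<rfloor> \<le> int (yseq (i+1))" by (simp add: floor_le_iff)
    show ?thesis unfolding cellD_def q using i u1' u2 ux v1 v2
      by (intro exI[of _ i]) auto
  qed
qed

lemma mem_translate: "p \<in> (\<lambda>x. s + x) ` S \<longleftrightarrow> p - s \<in> (S :: (real\<times>real) set)"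
  by (auto simp: image_iff intro!: bexI[of _ "p - s"])

lemma nonint_near: assumes e: "0 < (e::real)" shows "\<exists>d. 0 \<le> d \<and> d < e \<and> x + d \<notin> \<int>"
proof (cases "x \<in> \<int>")
  case False then show ?thesis using e by (intro exI[of _ 0]) auto
next
  assume x: "x \<in> \<int>"
  define d where "d = min (e/2) (1/2)"
  have d: "0 < d" "d < e" "d < 1" using e by (auto simp: d_def)
  have "x + d \<notin> \<int>"
  proof
    assume "x + d \<in> \<int>"
    then have "(x + d) - x \<in> \<int>" using x by (intro Ints_diff)
    then have "d \<in> \<int>" by simp
    then obtain z where z: "d = of_int z" by (auto elim: Ints_cases)
    then have "0 < z" "z < 1" using d by simp_all
    then show False by linarith
  qed
  then show ?thesis using d by (intro exI[of _ d]) auto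
qed

lemma interior_L: "interior {p::real\<times>real. fst p \<in> \<int> \<or> snd p \<in> \<int>} = {}"
proof (rule ccontr)
  assume "interior {p::real\<times>real. fst p \<in> \<int> \<or> snd p \<in> \<int>} \<noteq> {}"
  then obtain p where "p \<in> interior {p::real\<times>real. fst p \<in> \<int> \<or> snd p \<in> \<int>}" by blast
  then obtain e where e: "0 < e" "ball p e \<subseteq> {p::real\<times>real. fst p \<in> \<int> \<or> snd p \<in> \<int>}"
    by (meson mem_interior)
  obtain d1 where d1: "0 \<le> d1" "d1 < e/2" "fst p + d1 \<notin> \<int>" using nonint_near[of "e/2"] e by auto
  obtain d2 where d2: "0 \<le> d2" "d2 < e/2" "snd p + d2 \<notin> \<int>" using nonint_near[of "e/2"] e by auto
  have "dist p (fst p + d1, snd p + d2) = norm (d1, d2)"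
    by (cases p) (simp add: dist_norm norm_Pair)
  also have "\<dots> \<le> norm d1 + norm d2" by (rule norm_Pair_le)
  finally have "(fst p + d1, snd p + d2) \<in> ball p e" using d1 d2 by simp
  then show False using e d1 d2 by auto
qed

lemma interior_disj:
  assumes "A \<inter> B \<subseteq> {p::real\<times>real. fst p \<in> \<int> \<or> snd p \<in> \<int>}"
  shows "interior A \<inter> interior B = {}"
  using interior_mono[OF assms] interior_L by (simp add: interior_Int)



definition tt :: "nat \<Rightarrow> nat \<Rightarrow> nat" where "tt n k = 2^n - 2^(k-1)"
definition sa :: "nat \<Rightarrow> nat \<Rightarrow> nat \<Rightarrow> nat \<Rightarrow> nat" where
  "sa n m e k = (if k = 0 then 0 else tt n k * m + (n + e - k))"
definition sb :: "nat \<Rightarrow> nat \<Rightarrow> nat" where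
  "sb n k = (if k = 0 then 0 else yseq (tt n k + 1) + k)"
definition shv :: "nat \<Rightarrow> nat \<Rightarrow> nat \<Rightarrow> nat \<Rightarrow> real \<times> real" where
  "shv n m e k = (real (sa n m e k), real (sb n k))"

lemma shv0: "shv n m e 0 = 0" by (simp add: shv_def sa_def sb_def zero_prod_def)

lemma pair_core:
  assumes ij: "i < j" "j \<le> n" and nm: "n + e \<le> m"
    and C1: "cellD n m (U - int (sa n m e i)) (V - int (sb n i))"
    and C2: "cellD n m (U - int (sa n m e j)) (V - int (sb n j))"
  shows False
proof (cases "i = 0")
  case True
  have j1: "1 \<le> j" using ij by simp
  have "n + e - j < m" using j1 nm ij by linarith
  moreover have "cellD n m U V" using C1 True by (simp add: sa_def sb_def)
  moreover have "cellD n m (U - int (tt n j * m + (n + e - j))) (V - int (yseq (tt n j + 1) + j))"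
    using C2 j1 by (simp add: sa_def sb_def)
  ultimately show False using H[OF j1 ij(2), of "n+e-j" m "tt n j"] by (simp add: tt_def)
next
  case False
  then have i1: "1 \<le> i" by simp
  have j1: "1 \<le> j" using ij by simp
  define t :: nat where "t = 2^(j-1) - 2^(i-1)"
  have pij: "(2::nat)^(i-1) < 2^(j-1)" using ij i1 by (simp add: power_strict_increasing_iff)
  have pjn: "(2::nat)^(j-1) \<le> 2^n" using ij by (simp add: power_increasing)
  have tlt: "t < 2^(j-1)" using pij i1 unfolding t_def by (simp add: diff_less)
  have tti: "tt n i = tt n j + t" unfolding tt_def t_def using pij pjn by simp
  have dv: "2^(j-1) dvd tt n j" using tt_facts[OF j1 ij(2)] by (simp add: tt_def)
  have Ysh: "yseq (tt n i + 1) = yseq (tt n j + 1) + yseq (t + 1)"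
    using Y_shift[OF dv tlt] tti by simp
  define c where "c = j - i"
  have c: "1 \<le> c" "c < m" using ij nm i1 unfolding c_def by linarith+
  have saij: "sa n m e i = sa n m e j + (t*m + c)"
    using i1 j1 ij nm unfolding sa_def c_def tti by (simp add: add_mult_distrib)
  define \<beta> where "\<beta> = int (yseq (t+1)) + int i - int j"
  have sbij: "int (sb n i) = int (sb n j) + \<beta>"
    using i1 j1 Ysh unfolding sb_def \<beta>_def by simp
  have b: "\<beta> \<le> int (yseq (t+1)) - 1" using ij unfolding \<beta>_def by simp
  have C1': "cellD n m ((U - int (sa n m e j)) - int (t*m+c)) ((V - int (sb n j)) - \<beta>)"
    using C1 saij sbij by (simp add: algebra_simps)
  show False using G[OF c b C2 C1'] .
qed

lemma disj_D:
  assumes nm: "n + e \<le> m" and ij: "i \<le> n" "j \<le> n" "i \<noteq> j"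
  shows "interior ((\<lambda>x. shv n m e i + x) ` Dnm n m) \<inter> interior ((\<lambda>x. shv n m e j + x) ` Dnm n m) = {}"
proof -
  have m1: "1 \<le> m" using nm ij by linarith
  have main: "((\<lambda>x. shv n m e i + x) ` Dnm n m) \<inter> ((\<lambda>x. shv n m e j + x) ` Dnm n m)
      \<subseteq> {p::real\<times>real. fst p \<in> \<int> \<or> snd p \<in> \<int>}" if ij': "i < j" "j \<le> n" for i j
  proof
    fix p assume p: "p \<in> ((\<lambda>x. shv n m e i + x) ` Dnm n m) \<inter> ((\<lambda>x. shv n m e j + x) ` Dnm n m)"
    show "p \<in> {p::real\<times>real. fst p \<in> \<int> \<or> snd p \<in> \<int>}"
    proof (rule ccontr)
      assume "p \<notin> {p::real\<times>real. fst p \<in> \<int> \<or> snd p \<in> \<int>}"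
      then have nx: "fst p \<notin> \<int>" and ny: "snd p \<notin> \<int>" by auto
      have cell: "cellD n m (\<lfloor>fst p\<rfloor> - int (sa n m e k)) (\<lfloor>snd p\<rfloor> - int (sb n k))"
        if "p - shv n m e k \<in> Dnm n m" for k
      proof -
        have a: "fst (p - shv n m e k) = fst p - of_int (int (sa n m e k))" by (simp add: shv_def)
        have b: "snd (p - shv n m e k) = snd p - of_int (int (sb n k))" by (simp add: shv_def)
        have nx': "fst (p - shv n m e k) \<notin> \<int>"
        proof
          assume "fst (p - shv n m e k) \<in> \<int>"
          then have "fst (p - shv n m e k) + of_int (int (sa n m e k)) \<in> \<int>" by (intro Ints_add) auto
          then show False using nx a by simp
        qed
        have ny': "snd (p - shv n m e k) \<notin> \<int>"
        proof
          assume "snd (p - shv n m e k) \<in> \<int>"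
          then have "snd (p - shv n m e k) + of_int (int (sb n k)) \<in> \<int>" by (intro Ints_add) auto
          then show False using ny b by simp
        qed
        have "cellD n m \<lfloor>fst (p - shv n m e k)\<rfloor> \<lfloor>snd (p - shv n m e k)\<rfloor>"
          using cell_of[OF that nx' ny' m1] .
        then show ?thesis unfolding a b floor_diff_of_int .
      qed
      have "p - shv n m e i \<in> Dnm n m" "p - shv n m e j \<in> Dnm n m" using p by (auto simp: mem_translate)
      then show False using pair_core[OF ij' nm cell cell] by blast
    qed
  qed
  show ?thesis
  proof (cases "i < j")
    case True then show ?thesis using interior_disj[OF main[OF True ij(2)]] by blast
  next
    case False then have "j < i" using ij by simp
    then show ?thesis using interior_disj[OF main[OF \<open>j < i\<close> ij(1)]] by blast
  qed
qed



lemma in_bar: "1 \<le> i \<Longrightarrow> i \<le> 2^n \<Longrightarrow> (real i - 1) * real m \<le> x \<Longrightarrow> x \<le> real i * real m \<Longrightarrow>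
   real (yseq i) \<le> y \<Longrightarrow> y \<le> real (yseq i) + 1 \<Longrightarrow> (x, y) \<in> Dnm n m"
  unfolding Dnm_def bar_def by auto

lemma touch_data:
  assumes k: "2 \<le> k" "k \<le> n"
  defines "r \<equiv> (2::nat)^(k-2)"
  shows "r < 2^(k-1)" "r + tt n k + 1 \<le> 2^n"
    "yseq (r + tt n k + 1) = yseq (tt n k + 1) + yseq r + (k - 1)"
    "yseq (r + tt n k) = yseq (tt n k + 1) + yseq r" "1 \<le> r"
proof -
  have k1: "1 \<le> k" using k by simp
  have dv: "2^(k-1) dvd tt n k" and ts: "tt n k + 2^(k-1) = 2^n" using tt_facts[OF k1 k(2)] by (auto simp: tt_def)
  have e: "k - 1 = Suc (k-2)" using k by simp
  show rl: "r < 2^(k-1)" unfolding r_def e by simp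
  then show "r + tt n k + 1 \<le> 2^n" using ts by linarith
  show r1: "1 \<le> r" unfolding r_def by simp
  have "yseq (tt n k + r + 1) = yseq (tt n k + 1) + yseq (r + 1)" using Y_shift[OF dv rl] .
  also have "yseq (r+1) = yseq r + sseq r" using Y_Suc[OF r1] by simp
  also have "sseq r = k - 1" unfolding r_def s_pow using k by simp
  finally show "yseq (r + tt n k + 1) = yseq (tt n k + 1) + yseq r + (k - 1)" by (simp add: add.commute add.left_commute)
  have "r - 1 < 2^(k-1)" using rl by simp
  from Y_shift[OF dv this] show "yseq (r + tt n k) = yseq (tt n k + 1) + yseq r" using r1 by (simp add: add.commute)
qed

lemma touch_D:
  assumes nm: "n + e \<le> m" and k: "1 \<le> k" "k \<le> n"
  shows "Dnm n m \<inter> (\<lambda>x. shv n m e k + x) ` Dnm n m \<noteq> {}"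
proof -
  define c where "c = n + e - k"
  have c: "c < m" using nm k unfolding c_def by linarith
  have sak: "sa n m e k = tt n k * m + c" using k by (simp add: sa_def c_def)
  have sbk: "sb n k = yseq (tt n k + 1) + k" using k by (simp add: sb_def)
  have np: "1 \<le> (2::nat)^n" by simp
  show ?thesis
  proof (cases "k = 1")
    case True
    have tt1: "tt n k = 2^n - 1" using True by (simp add: tt_def)
    define P where "P = (real (sa n m e k) + 1/2, real (yseq (2^n)) + 1)"
    have r1: "real (sa n m e k) = (real (2^n) - 1) * real m + real c" using sak tt1 np
      by (simp add: of_nat_diff)
    have cm: "real c + 1/2 \<le> real m" using c by linarith
    have "P \<in> Dnm n m" unfolding P_def r1
      by (rule in_bar[of "2^n"]) (use np cm in \<open>auto simp: algebra_simps\<close>)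
    moreover have "P - shv n m e k = (1/2, 0)" unfolding P_def shv_def sbk tt1 using True np
      by (simp add: of_nat_diff)
    moreover have "((1::real)/2, 0::real) \<in> Dnm n m"
      by (rule in_bar[of 1]) (use nm k in auto)
    ultimately show ?thesis by (auto simp: mem_translate)
  next
    case False
    then have k2: "2 \<le> k" using k by simp
    define r where "r = (2::nat)^(k-2)"
    note td = touch_data[OF k2 k(2), folded r_def]
    define i where "i = r + tt n k"
    define P where "P = (real (i*m), real (yseq (i+1)) + 1)"
    have "P \<in> Dnm n m" unfolding P_def
      by (rule in_bar[of "i+1"]) (use td in \<open>auto simp: i_def algebra_simps\<close>)
    moreover have "P - shv n m e k = (real r * real m - real c, real (yseq r))"
      unfolding P_def shv_def sak sbk i_def using td(3) k2
      by (simp add: algebra_simps of_nat_diff)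
    moreover have "(real r * real m - real c, real (yseq r)) \<in> Dnm n m"
      by (rule in_bar[of r]) (use td c in \<open>auto simp: algebra_simps\<close>)
    ultimately show ?thesis by (auto simp: mem_translate)
  qed
qed



definition ramp :: "real \<Rightarrow> real" where "ramp z = max 0 (min 1 z)"

definition gfun :: "nat \<Rightarrow> nat \<Rightarrow> real \<Rightarrow> real" where
  "gfun n m x = (\<Sum>j\<in>{1..<2^n}. real (sseq j) * ramp (x - (real j * real m - 1)))"

definition band :: "nat \<Rightarrow> nat \<Rightarrow> (real \<times> real) set" where
  "band n m = {p. 0 \<le> fst p \<and> fst p \<le> real (2^n) * real m \<and> gfun n m (fst p) \<le> snd p \<and> snd p \<le> gfun n m (fst p) + 1}"

lemma gfun_eq:
  assumes m: "1 \<le> m" and i: "1 \<le> i" "i \<le> 2^n" and x: "(real i - 1) * real m \<le> x" "x \<le> real i * real m"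
  shows "gfun n m x = real (yseq i) + (if i < 2^n then real (sseq i) * ramp (x - (real i * real m - 1)) else 0)"
proof -
  let ?f = "\<lambda>j. real (sseq j) * ramp (x - (real j * real m - 1))"
  have split: "sum ?f {1..<2^n} = sum ?f {1..<i} + sum ?f {i..<2^n}"
    using i by (simp add: sum.atLeastLessThan_concat)
  have low: "sum ?f {1..<i} = real (yseq i)"
  proof -
    have "sum ?f {1..<i} = sum (\<lambda>j. real (sseq j)) {1..<i}"
    proof (rule sum.cong)
      fix j assume "j \<in> {1..<i}"
      then have "real j \<le> real i - 1" by auto
      then have "real j * real m \<le> (real i - 1) * real m" by (rule mult_right_mono) simp
      then have "ramp (x - (real j * real m - 1)) = 1" using x unfolding ramp_def by auto
      then show "?f j = real (sseq j)" by simp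
    qed simp
    then show ?thesis by (simp add: yseq_def)
  qed
  have high: "sum ?f {Suc i..<2^n} = 0"
  proof (rule sum.neutral, rule ballI)
    fix j assume "j \<in> {Suc i..<2^n}"
    then have "real i + 1 \<le> real j" by auto
    then have "(real i + 1) * real m \<le> real j * real m" by (rule mult_right_mono) simp
    then have "ramp (x - (real j * real m - 1)) = 0" using x m unfolding ramp_def
      by (auto simp: algebra_simps)
    then show "?f j = 0" by simp
  qed
  show ?thesis
  proof (cases "i < 2^n")
    case True
    have "sum ?f {i..<2^n} = ?f i + sum ?f {Suc i..<2^n}" using True by (simp add: sum.atLeast_Suc_lessThan)
    then show ?thesis unfolding gfun_def split low using high True by simp
  next
    case False
    then show ?thesis unfolding gfun_def split low by simp
  qed
qed

lemma block_exists:
  assumes m: "1 \<le> m" and x: "0 \<le> x" "x \<le> real (2^n) * real m"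
  shows "\<exists>i. 1 \<le> i \<and> i \<le> 2^n \<and> (real i - 1) * real m \<le> x \<and> x \<le> real i * real m"
proof -
  define f where "f = \<lfloor>x / real m\<rfloor>"
  have mp: "0 < real m" using m by simp
  have f0: "0 \<le> f" unfolding f_def using x mp by simp
  show ?thesis
  proof (cases "f \<ge> int (2^n)")
    case True
    then have "real (2^n) \<le> x / real m" unfolding f_def by (simp add: le_floor_iff)
    then have "real (2^n) * real m \<le> x" using mp by (simp add: pos_le_divide_eq)
    then have "x = real (2^n) * real m" using x by simp
    then show ?thesis by (intro exI[of _ "2^n"]) (auto simp: algebra_simps)
  next
    case False
    define i where "i = nat f + 1"
    have ri: "real i - 1 = of_int f" using f0 unfolding i_def by simp
    have a: "of_int f \<le> x / real m" unfolding f_def by simp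
    have b: "x / real m < of_int f + 1" unfolding f_def by linarith
    have "(real i - 1) * real m \<le> x" unfolding ri using a mp by (simp add: pos_le_divide_eq)
    moreover have "x \<le> real i * real m"
    proof -
      have "x / real m \<le> real i" using b ri by linarith
      then show ?thesis using mp by (simp add: pos_divide_le_eq)
    qed
    moreover have "i \<le> 2^n" using False f0 unfolding i_def by linarith
    ultimately show ?thesis by (intro exI[of _ i]) (auto simp: i_def)
  qed
qed

lemma band_sub:
  assumes m: "1 \<le> m"
  shows "band n m \<subseteq> Dnm n m"
proof
  fix p assume p: "p \<in> band n m"
  obtain x y where pxy: "p = (x, y)" by (cases p)
  have x: "0 \<le> x" "x \<le> real (2^n) * real m" and y: "gfun n m x \<le> y" "y \<le> gfun n m x + 1"
    using p unfolding band_def pxy by auto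
  obtain i where i: "1 \<le> i" "i \<le> 2^n" "(real i - 1) * real m \<le> x" "x \<le> real i * real m"
    using block_exists[OF m x] by blast
  note g = gfun_eq[OF m i]
  show "p \<in> Dnm n m"
  proof (cases "i < 2^n \<and> real i * real m - 1 < x")
    case False
    then have "gfun n m x = real (yseq i)"
      using g by (auto simp: ramp_def)
    then show ?thesis unfolding pxy using in_bar[OF i(1,2) i(3,4)] y by auto
  next
    case True
    have r: "0 \<le> ramp (x - (real i * real m - 1))" "ramp (x - (real i * real m - 1)) \<le> 1"
      unfolding ramp_def by auto
    have gl: "real (yseq i) \<le> gfun n m x" using g r True by simp
    have Ys: "real (yseq (i+1)) = real (yseq i) + real (sseq i)" using Y_Suc[OF i(1)] by simp
    have "real (sseq i) * ramp (x - (real i * real m - 1)) \<le> real (sseq i)"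
      using r by (simp add: mult_left_le)
    then have gu: "gfun n m x \<le> real (yseq (i+1))" using g True Ys by simp
    show ?thesis
    proof (cases "y \<le> real (yseq i) + 1")
      case True
      then show ?thesis unfolding pxy using in_bar[OF i(1,2) i(3,4)] y gl by auto
    next
      case False
      have "(x, y) \<in> connector m i" unfolding connector_def using True False y gu i by auto
      then show ?thesis unfolding pxy Dnm_def using i True by auto
    qed
  qed
qed

lemma gfun_cont: "continuous_on S (gfun n m)"
  unfolding gfun_def ramp_def by (intro continuous_intros)

lemma band_disk:
  assumes m: "1 \<le> m"
  shows "topological_disk (band n m)"
proof -
  define W where "W = real (2^n) * real m"
  have W: "0 < W" using m unfolding W_def by simp
  define S where "S = {0..W} \<times> {0..(1::real)}"
  define f where "f = (\<lambda>p::real\<times>real. (fst p, gfun n m (fst p) + snd p))"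
  have cS: "compact S" unfolding S_def by (intro compact_Times compact_Icc)
  have vS: "convex S" unfolding S_def by (intro convex_Times convex_real_interval)
  have iS: "interior S \<noteq> {}" unfolding S_def interior_Times using W by auto
  have "cball (0::real\<times>real) 1 homeomorphic S"
    by (rule homeomorphic_convex_compact_sets)
       (use cS vS iS in \<open>auto simp: aff_dim_cball aff_dim_nonempty_interior\<close>)
  moreover have "S homeomorphic band n m"
  proof (rule homeomorphic_compact[OF cS])
    show "continuous_on S f" unfolding f_def
      by (intro continuous_intros continuous_on_compose2[OF gfun_cont]) auto
    show "inj_on f S" unfolding f_def inj_on_def by auto
    show "f ` S = band n m"
    proof
      show "f ` S \<subseteq> band n m" unfolding f_def S_def band_def W_def by auto
      show "band n m \<subseteq> f ` S"
      proof
        fix p assume "p \<in> band n m"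
        then have "(fst p, snd p - gfun n m (fst p)) \<in> S" "p = f (fst p, snd p - gfun n m (fst p))"
          unfolding S_def band_def f_def W_def by auto
        then show "p \<in> f ` S" by blast
      qed
    qed
  qed
  ultimately show ?thesis unfolding topological_disk_def by (rule homeomorphic_trans)
qed



lemma in_band: "0 \<le> x \<Longrightarrow> x \<le> real (2^n) * real m \<Longrightarrow> gfun n m x = g \<Longrightarrow> g \<le> y \<Longrightarrow> y \<le> g + 1
  \<Longrightarrow> (x, y) \<in> band n m"
  unfolding band_def by auto

lemma touch_band:
  assumes nm: "n + e \<le> m" and e: "1 \<le> e" and k: "1 \<le> k" "k \<le> n"
  shows "band n m \<inter> (\<lambda>x. shv n m e k + x) ` band n m \<noteq> {}"
proof -
  define c where "c = n + e - k"
  have c: "c < m" "1 \<le> c" using nm k e unfolding c_def by linarith+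
  have m1: "1 \<le> m" using c by simp
  have sak: "sa n m e k = tt n k * m + c" using k by (simp add: sa_def c_def)
  have sbk: "sb n k = yseq (tt n k + 1) + k" using k by (simp add: sb_def)
  have np: "1 \<le> (2::nat)^n" by simp
  have "(2::nat)^1 \<le> 2^n" using k by (intro power_increasing) auto
  then have n2: "1 < (2::nat)^n" by simp
  show ?thesis
  proof (cases "k = 1")
    case True
    have tt1: "tt n k = 2^n - 1" using True by (simp add: tt_def)
    define P where "P = (real (sa n m e k) + 1/2, real (yseq (2^n)) + 1)"
    have r1: "real (sa n m e k) = (real (2^n) - 1) * real m + real c" using sak tt1 np
      by (simp add: of_nat_diff)
    have cm: "real c + 1/2 \<le> real m" using c by linarith
    have x1: "(real (2^n) - 1) * real m \<le> (real (2^n) - 1) * real m + real c + 1/2" by simp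
    have x2: "(real (2^n) - 1) * real m + real c + 1/2 \<le> real (2^n) * real m" using cm by (simp add: algebra_simps)
    have x0: "0 \<le> (real (2^n) - 1) * real m" using np by simp
    have "gfun n m ((real (2^n) - 1) * real m + real c + 1/2) = real (yseq (2^n))"
      using gfun_eq[OF m1 np order_refl x1 x2] by simp
    then have "P \<in> band n m" unfolding P_def r1
      by (intro in_band) (use x0 x2 in \<open>auto simp: add.assoc\<close>)
    moreover have "P - shv n m e k = (1/2, 0)" unfolding P_def shv_def sbk tt1 using True np
      by (simp add: of_nat_diff)
    moreover have "((1::real)/2, 0::real) \<in> band n m"
    proof -
      have m2: "2 \<le> m" using nm k e by linarith
      have "gfun n m (1/2) = 0 + real (sseq 1) * ramp (1/2 - (real m - 1))"
        using gfun_eq[OF m1 order_refl np, of "1/2"] n2 m1 by simp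
      also have "ramp (1/2 - (real m - 1)) = 0" using m2 unfolding ramp_def by simp
      moreover have "(1::real) * 1 \<le> 2^n * real m" by (rule mult_mono) (use m1 in auto)
      ultimately show ?thesis by (intro in_band) auto
    qed
    ultimately show ?thesis by (auto simp: mem_translate)
  next
    case False
    then have k2: "2 \<le> k" using k by simp
    define r where "r = (2::nat)^(k-2)"
    note td = touch_data[OF k2 k(2), folded r_def]
    define i where "i = r + tt n k"
    define P where "P = (real (i*m), real (yseq (i+1)) + 1)"
    have i1: "1 \<le> i" "i < 2^n" using td unfolding i_def by auto
    have Ys: "real (yseq (i+1)) = real (yseq i) + real (sseq i)" using Y_Suc[OF i1(1)] by simp
    have "gfun n m (real i * real m) = real (yseq (i+1))"
      using gfun_eq[OF m1 i1(1) less_imp_le[OF i1(2)], of "real i * real m"] i1 Ys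
      by (simp add: ramp_def algebra_simps)
    moreover have "real i * real m \<le> real (2^n) * real m" using i1 by (intro mult_right_mono) auto
    ultimately have "P \<in> band n m" unfolding P_def by (intro in_band) auto
    moreover have "P - shv n m e k = (real r * real m - real c, real (yseq r))"
      unfolding P_def shv_def sak sbk i_def using td(3) k2
      by (simp add: algebra_simps of_nat_diff)
    moreover have "(real r * real m - real c, real (yseq r)) \<in> band n m"
    proof -
      have r2: "r \<le> 2^n" using td by simp
      have xa: "(real r - 1) * real m \<le> real r * real m - real c" using c by (simp add: algebra_simps)
      have xb: "real r * real m - real c \<le> real r * real m" by simp
      have "ramp (real r * real m - real c - (real r * real m - 1)) = 0" using c unfolding ramp_def by simp
      then have "gfun n m (real r * real m - real c) = real (yseq r)"
        using gfun_eq[OF m1 td(5) r2 xa xb] by simp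
      moreover have "0 \<le> real r * real m - real c"
        using xa td(5) by (smt (verit) mult_nonneg_nonneg of_nat_0_le_iff of_nat_1 of_nat_mono)
      moreover have "real r * real m - real c \<le> real (2^n) * real m"
        using xb r2 by (smt (verit) mult_right_mono of_nat_0_le_iff of_nat_mono)
      ultimately show ?thesis by (intro in_band) auto
    qed
    ultimately show ?thesis by (auto simp: mem_translate)
  qed
qed


theorem theorem3:
  shows "(\<forall>n m :: nat. 2 \<le> n \<longrightarrow> n \<le> m \<longrightarrow>
            (\<exists>t :: nat \<Rightarrow> real \<times> real.
               (\<forall>i\<le>n. \<forall>j\<le>n. i \<noteq> j \<longrightarrow>
                  interior ((\<lambda>x. t i + x) ` Dnm n m) \<inter> interior ((\<lambda>x. t j + x) ` Dnm n m) = {}) \<and>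
               (\<forall>i\<in>{1..n}. ((\<lambda>x. t 0 + x) ` Dnm n m) \<inter> ((\<lambda>x. t i + x) ` Dnm n m) \<noteq> {})))
       \<and> (\<forall>n :: nat. 0 < n \<longrightarrow>
            (\<exists>(A0 :: (real \<times> real) set) (t :: nat \<Rightarrow> real \<times> real).
               topological_disk A0 \<and> t 0 = 0 \<and>
               (\<forall>i\<le>n. \<forall>j\<le>n. i \<noteq> j \<longrightarrow>
                  interior ((\<lambda>x. t i + x) ` A0) \<inter> interior ((\<lambda>x. t j + x) ` A0) = {}) \<and>
               (\<forall>i\<in>{1..n}. A0 \<inter> ((\<lambda>x. t i + x) ` A0) \<noteq> {})))"
  proof -
  have P1: "\<forall>n m :: nat. 2 \<le> n \<longrightarrow> n \<le> m \<longrightarrow>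
            (\<exists>t :: nat \<Rightarrow> real \<times> real.
               (\<forall>i\<le>n. \<forall>j\<le>n. i \<noteq> j \<longrightarrow>
                  interior ((\<lambda>x. t i + x) ` Dnm n m) \<inter> interior ((\<lambda>x. t j + x) ` Dnm n m) = {}) \<and>
               (\<forall>i\<in>{1..n}. ((\<lambda>x. t 0 + x) ` Dnm n m) \<inter> ((\<lambda>x. t i + x) ` Dnm n m) \<noteq> {}))"
  proof (intro allI impI)
    fix n m :: nat assume nm: "2 \<le> n" "n \<le> m"
    have nm0: "n + 0 \<le> m" using nm by simp
    show "\<exists>t :: nat \<Rightarrow> real \<times> real.
               (\<forall>i\<le>n. \<forall>j\<le>n. i \<noteq> j \<longrightarrow>
                  interior ((\<lambda>x. t i + x) ` Dnm n m) \<inter> interior ((\<lambda>x. t j + x) ` Dnm n m) = {}) \<and>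
               (\<forall>i\<in>{1..n}. ((\<lambda>x. t 0 + x) ` Dnm n m) \<inter> ((\<lambda>x. t i + x) ` Dnm n m) \<noteq> {})"
    proof (intro exI[of _ "shv n m 0"] conjI allI impI ballI)
      fix i j assume "i \<le> n" "j \<le> n" "i \<noteq> j"
      then show "interior ((\<lambda>x. shv n m 0 i + x) ` Dnm n m) \<inter> interior ((\<lambda>x. shv n m 0 j + x) ` Dnm n m) = {}"
        using disj_D[OF nm0] by blast
    next
      fix i assume "i \<in> {1..n}"
      then show "((\<lambda>x. shv n m 0 0 + x) ` Dnm n m) \<inter> ((\<lambda>x. shv n m 0 i + x) ` Dnm n m) \<noteq> {}"
        using touch_D[OF nm0, of i] by (simp add: shv0)
    qed
  qed
  have P2: "\<forall>n :: nat. 0 < n \<longrightarrow>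
            (\<exists>(A0 :: (real \<times> real) set) (t :: nat \<Rightarrow> real \<times> real).
               topological_disk A0 \<and> t 0 = 0 \<and>
               (\<forall>i\<le>n. \<forall>j\<le>n. i \<noteq> j \<longrightarrow>
                  interior ((\<lambda>x. t i + x) ` A0) \<inter> interior ((\<lambda>x. t j + x) ` A0) = {}) \<and>
               (\<forall>i\<in>{1..n}. A0 \<inter> ((\<lambda>x. t i + x) ` A0) \<noteq> {}))"
  proof (intro allI impI)
    fix n :: nat assume n: "0 < n"
    have nm1: "n + 1 \<le> n + 1" by simp
    have m1: "1 \<le> n + 1" by simp
    show "\<exists>(A0 :: (real \<times> real) set) (t :: nat \<Rightarrow> real \<times> real).
               topological_disk A0 \<and> t 0 = 0 \<and>
               (\<forall>i\<le>n. \<forall>j\<le>n. i \<noteq> j \<longrightarrow>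
                  interior ((\<lambda>x. t i + x) ` A0) \<inter> interior ((\<lambda>x. t j + x) ` A0) = {}) \<and>
               (\<forall>i\<in>{1..n}. A0 \<inter> ((\<lambda>x. t i + x) ` A0) \<noteq> {})"
    proof (intro exI[of _ "band n (n+1)"] exI[of _ "shv n (n+1) 1"] conjI allI impI ballI)
      show "topological_disk (band n (n+1))" using band_disk[OF m1] .
      show "shv n (n+1) 1 0 = 0" by (rule shv0)
    next
      fix i j assume ij: "i \<le> n" "j \<le> n" "i \<noteq> j"
      have s: "\<And>k. interior ((\<lambda>x. shv n (n+1) 1 k + x) ` band n (n+1))
          \<subseteq> interior ((\<lambda>x. shv n (n+1) 1 k + x) ` Dnm n (n+1))"
        by (intro interior_mono image_mono band_sub[OF m1])
      show "interior ((\<lambda>x. shv n (n+1) 1 i + x) ` band n (n+1)) \<inter> interior ((\<lambda>x. shv n (n+1) 1 j + x) ` band n (n+1)) = {}"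
        using disj_D[OF nm1 ij] s[of i] s[of j] by blast
    next
      fix i assume "i \<in> {1..n}"
      then show "band n (n+1) \<inter> ((\<lambda>x. shv n (n+1) 1 i + x) ` band n (n+1)) \<noteq> {}"
        using touch_band[OF nm1, of i] by simp
    qed
  qed
  show ?thesis using P1 P2 by blast
qed

end
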